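(* Let $f:\mathbb{R}^n\to\mathbb{R}$ be of class $C^{2+}$ with $L_f$-Lipschitz continuous gradient, let $g:\mathbb{R}^n\to\mathbb{R}\cup\{+\infty\}$ be proper, lower semicontinuous and $\rho$-weakly convex, let $\varphi=f+g$ with $\operatorname{argmin}\varphi\neq\emptyset$, and suppose $\{x:\varphi(x)\le\varphi(x^0)\}$ is bounded. Let $(x^k)$ be generated by the NTRA algorithm described in the context, and suppose that there is $M>0$ with $\|B_k\|\le M$ for all $k$ and there is $\beta\in(0,1)$ with $m_k(0)-m_k(d^k)\ge\beta\|\nabla\varphi_\gamma(x^k)\|\min\{\delta_k,\|\nabla\varphi_\gamma(x^k)\|/\|B_k\|\}$ for all $k$. Then $\liminf_{k\to\infty}\|\nabla\varphi_\gamma(x^k)\|=0$.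
   Context: $C^{2+}$: twice continuously differentiable with locally Lipschitz Hessian; $\rho$-weakly convex: $g+\frac\rho2\|\cdot\|^2$ convex. $\operatorname{prox}_{\gamma g}(x)=\operatorname{argmin}_z\{g(z)+\frac1{2\gamma}\|z-x\|^2\}$, $R_\gamma(x)=\gamma^{-1}(x-\operatorname{prox}_{\gamma g}(x-\gamma\nabla f(x)))$, forward-backward envelope $\varphi_\gamma(x)=\inf_u\{f(x)+\langle\nabla f(x),u-x\rangle+g(u)+\frac1{2\gamma}\|u-x\|^2\}$. $\partial_C$: Clarke generalized Jacobian. NTRA: given $x^0$, $\gamma\in(0,\min\{1/L_f,1/\rho\})$, $\delta_0>0$, $0<\mu_1<\mu_2<1$, $0<c_1<c_2<1<c_3$; for $k=0,1,\dots$: select $P_k\in\partial_C\operatorname{prox}_{\gamma g}(x^k-\gamma\nabla f(x^k))$; $Q_k=I-\gamma\nabla^2f(x^k)$, $B_k=\gamma^{-1}Q_k(I-P_kQ_k)$; stop if $R_\gamma(x^k)=0$ and $\lambda_{\min}(B_k)\ge0$; $d^k$ is an (approximate) solution of $\min_d m_k(d):=\varphi_\gamma(x^k)+\langle\nabla\varphi_\gamma(x^k),d\rangle+\frac12\langle B_kd,d\rangle$ s.t. $\|d\|\le\delta_k$; $\rho_k=\frac{\varphi_\gamma(x^k)-\varphi_\gamma(x^k+d^k)}{m_k(0)-m_k(d^k)}$; $x^{k+1}=x^k$ if $\rho_k<\mu_1$, else $x^k+d^k$; $\delta_{k+1}=c_1\delta_k$ if $\rho_k<\mu_1$, $c_2\delta_k$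 if $\mu_1\le\rho_k<\mu_2$, $c_3\delta_k$ if $\rho_k\ge\mu_2$. *)

theory Defs
  imports "HOL-Analysis.Analysis"
begin

definition grad :: "(real^'n \<Rightarrow> real) \<Rightarrow> real^'n \<Rightarrow> real^'n" where
  "grad f x = (THE v. (f has_derivative (\<lambda>h. v \<bullet> h)) (at x))"

definition hess :: "(real^'n \<Rightarrow> real) \<Rightarrow> real^'n \<Rightarrow> real^'n^'n" where
  "hess f x = (THE H. (grad f has_derivative (\<lambda>h. H *v h)) (at x))"

definition C2plus :: "(real^'n \<Rightarrow> real) \<Rightarrow> bool" where
  "C2plus f \<longleftrightarrow>
     (\<forall>x. f differentiable (at x)) \<and>
     (\<forall>x. grad f differentiable (at x)) \<and>
     continuous_on UNIV (hess f) \<and>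
     (\<forall>x. \<exists>e>0. \<exists>K. \<forall>y\<in>ball x e. \<forall>z\<in>ball x e. norm (hess f y - hess f z) \<le> K * dist y z)"

definition lipschitz_grad :: "real \<Rightarrow> (real^'n \<Rightarrow> real) \<Rightarrow> bool" where
  "lipschitz_grad L f \<longleftrightarrow> (\<forall>x y. norm (grad f x - grad f y) \<le> L * dist x y)"

definition proper_fun :: "(real^'n \<Rightarrow> ereal) \<Rightarrow> bool" where
  "proper_fun g \<longleftrightarrow> (\<forall>x. g x \<noteq> -\<infinity>) \<and> (\<exists>x. g x \<noteq> \<infinity>)"

definition lsc_fun :: "(real^'n \<Rightarrow> ereal) \<Rightarrow> bool" where
  "lsc_fun g \<longleftrightarrow> (\<forall>x. g x \<le> Liminf (at x) g)"

definition convex_efun :: "(real^'n \<Rightarrow> ereal) \<Rightarrow> bool" where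
  "convex_efun h \<longleftrightarrow> (\<forall>x y t. 0 \<le> t \<and> t \<le> 1 \<longrightarrow>
      h (t *\<^sub>R x + (1 - t) *\<^sub>R y) \<le> ereal t * h x + ereal (1 - t) * h y)"

definition weakly_convex :: "real \<Rightarrow> (real^'n \<Rightarrow> ereal) \<Rightarrow> bool" where
  "weakly_convex \<rho> g \<longleftrightarrow> convex_efun (\<lambda>x. g x + ereal (\<rho> / 2 * (norm x)\<^sup>2))"

definition prox :: "real \<Rightarrow> (real^'n \<Rightarrow> ereal) \<Rightarrow> real^'n \<Rightarrow> real^'n" where
  "prox \<gamma> g x = (THE z. \<forall>w. g z + ereal ((norm (z - x))\<^sup>2 / (2 * \<gamma>))
                             \<le> g w + ereal ((norm (w - x))\<^sup>2 / (2 * \<gamma>)))"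

definition residual :: "real \<Rightarrow> (real^'n \<Rightarrow> real) \<Rightarrow> (real^'n \<Rightarrow> ereal) \<Rightarrow> real^'n \<Rightarrow> real^'n" where
  "residual \<gamma> f g x = (1 / \<gamma>) *\<^sub>R (x - prox \<gamma> g (x - \<gamma> *\<^sub>R grad f x))"

definition fbe :: "real \<Rightarrow> (real^'n \<Rightarrow> real) \<Rightarrow> (real^'n \<Rightarrow> ereal) \<Rightarrow> real^'n \<Rightarrow> real" where
  "fbe \<gamma> f g x = real_of_ereal (INF u. ereal (f x + grad f x \<bullet> (u - x) + (norm (u - x))\<^sup>2 / (2 * \<gamma>)) + g u)"

definition bouligand_jac :: "(real^'n \<Rightarrow> real^'n) \<Rightarrow> real^'n \<Rightarrow> (real^'n^'n) set" where
  "bouligand_jac F x = {A. \<exists>xs As. xs \<longlonglongrightarrow> x \<and> As \<longlonglongrightarrow> A \<and>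
        (\<forall>j. (F has_derivative (\<lambda>h. As j *v h)) (at (xs j)))}"

definition clarke_jac :: "(real^'n \<Rightarrow> real^'n) \<Rightarrow> real^'n \<Rightarrow> (real^'n^'n) set" where
  "clarke_jac F x = convex hull (bouligand_jac F x)"

definition lambda_min :: "real^'n^'n \<Rightarrow> real" where
  "lambda_min B = Min {l. \<exists>v. v \<noteq> 0 \<and> B *v v = l *\<^sub>R v}"

definition tr_model :: "(real^'n \<Rightarrow> real) \<Rightarrow> real^'n^'n \<Rightarrow> real^'n \<Rightarrow> real^'n \<Rightarrow> real" where
  "tr_model \<phi> B x d = \<phi> x + grad \<phi> x \<bullet> d + 1 / 2 * (d \<bullet> (B *v d))"

end

theory Submission
  imports Defs
begin


lemma linear_functional_rep:
  fixes D :: "real^'n \<Rightarrow> real"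
  assumes "linear D"
  shows "D = (\<lambda>h. (\<Sum>i\<in>Basis. D i *\<^sub>R i) \<bullet> h)"
proof
  fix h :: "real^'n"
  have "D h = D (\<Sum>i\<in>Basis. (h \<bullet> i) *\<^sub>R i)" by (simp add: euclidean_representation)
  also have "\<dots> = (\<Sum>i\<in>Basis. (h \<bullet> i) * D i)"
    by (simp add: linear_sum[OF assms] linear_scale[OF assms])
  also have "\<dots> = (\<Sum>i\<in>Basis. D i *\<^sub>R i) \<bullet> h"
    unfolding inner_sum_left by (simp add: inner_commute mult.commute)
  finally show "D h = (\<Sum>i\<in>Basis. D i *\<^sub>R i) \<bullet> h" .
qed
lemma grad_eqI:
  fixes F :: "real^'n \<Rightarrow> real"
  assumes "(F has_derivative (\<lambda>h. v \<bullet> h)) (at x)"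
  shows "grad F x = v"
  unfolding grad_def
proof (rule the_equality)
  show "(F has_derivative (\<lambda>h. v \<bullet> h)) (at x)" by (rule assms)
  fix w assume "(F has_derivative (\<lambda>h. w \<bullet> h)) (at x)"
  from has_derivative_unique[OF assms this] have "\<And>h. v \<bullet> h = w \<bullet> h" by metis
  from this[of "v - w"] have "(v - w) \<bullet> (v - w) = 0" by (simp add: inner_diff_left)
  then show "w = v" by simp
qed

lemma hess_eqI:
  fixes F :: "real^'n \<Rightarrow> real"
  assumes "(grad F has_derivative (\<lambda>h. H *v h)) (at x)"
  shows "hess F x = H"
  unfolding hess_def
proof (rule the_equality)
  show "(grad F has_derivative (\<lambda>h. H *v h)) (at x)" by (rule assms)
  fix H' assume "(grad F has_derivative (\<lambda>h. H' *v h)) (at x)"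
  from has_derivative_unique[OF assms this] have "\<And>h. H *v h = H' *v h" by metis
  then show "H' = H" by (simp add: matrix_eq)
qed

lemma exists_nonzero_vec: "\<exists>v::real^'n. v \<noteq> 0"
  by (metis axis_nth zero_index zero_neq_one)

lemma parallel_id:
  fixes u v z :: "real^'n"
  shows "(norm ((1/2) *\<^sub>R u + (1/2) *\<^sub>R v - z))\<^sup>2 = (norm (u - z))\<^sup>2 / 2 + (norm (v - z))\<^sup>2 / 2 - (norm (u - v))\<^sup>2 / 4"
  apply (simp add: power2_norm_eq_inner inner_simps algebra_simps inner_commute)
  by (simp add: field_simps)

lemma sq_diff_id:
  fixes u z z' :: "real^'n"
  shows "(norm (u - z'))\<^sup>2 - (norm (u - z))\<^sup>2 = 2 * (u \<bullet> (z - z')) + (norm z')\<^sup>2 - (norm z)\<^sup>2"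
  by (simp add: power2_norm_eq_inner inner_simps algebra_simps inner_commute)

lemma quad_lower:
  fixes a t b :: real
  assumes "0 < a"
  shows "a * t\<^sup>2 - b * t \<ge> - b\<^sup>2 / (4 * a)"
proof -
  have "0 \<le> (2 * a * t - b)\<^sup>2" by simp
  then have "0 \<le> 4 * a * (a * t\<^sup>2 - b * t) + b\<^sup>2" by (simp add: power2_eq_square algebra_simps)
  then show ?thesis using assms by (simp add: field_simps)
qed

locale fgsetup =
  fixes f :: "real^'n \<Rightarrow> real" and g :: "real^'n \<Rightarrow> ereal" and L \<rho> \<gamma> :: real
  assumes f_C2: "C2plus f"
    and f_lip: "lipschitz_grad L f"
    and g_proper: "proper_fun g" and g_lsc: "lsc_fun g"
    and g_wc: "weakly_convex \<rho> g" and rho_nonneg: "0 \<le> \<rho>"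
    and argmin_ne: "\<exists>z. \<forall>y. ereal (f z) + g z \<le> ereal (f y) + g y"
    and gamma_pos: "0 < \<gamma>" and gL: "\<gamma> * L < 1" and grho: "\<gamma> * \<rho> < 1"
begin

lemma f_deriv: "(f has_derivative (\<lambda>h. grad f x \<bullet> h)) (at x)"
proof -
  from f_C2 have "f differentiable (at x)" by (simp add: C2plus_def)
  then obtain D where D: "(f has_derivative D) (at x)" by (auto simp: differentiable_def)
  have "linear D" using D by (rule has_derivative_linear)
  from linear_functional_rep[OF this] D have D2: "(f has_derivative (\<lambda>h. (\<Sum>i\<in>Basis. D i *\<^sub>R i) \<bullet> h)) (at x)"
    by simp
  show ?thesis using D2 grad_eqI[OF D2] by simp
qed

lemma gf_deriv: "(grad f has_derivative (\<lambda>h. hess f x *v h)) (at x)"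
proof -
  from f_C2 have "grad f differentiable (at x)" by (simp add: C2plus_def)
  then obtain D where D: "(grad f has_derivative D) (at x)" by (auto simp: differentiable_def)
  have "linear D" using D by (rule has_derivative_linear)
  then have D2: "(grad f has_derivative (\<lambda>h. matrix D *v h)) (at x)" using D by simp
  show ?thesis using D2 hess_eqI[OF D2] by simp
qed

lemma L_nonneg: "0 \<le> L"
proof -
  obtain v :: "real^'n" where "v \<noteq> 0" using exists_nonzero_vec by blast
  have "0 \<le> norm (grad f v - grad f 0)" by simp
  also have "\<dots> \<le> L * dist v 0" using f_lip[unfolded lipschitz_grad_def, rule_format, of v 0] by simp
  finally show ?thesis using \<open>v \<noteq> 0\<close> by (simp add: zero_le_mult_iff)
qed

lemma gf_lipschitz: "L-lipschitz_on UNIV (grad f)"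
  using f_lip L_nonneg by (auto simp: lipschitz_on_def lipschitz_grad_def dist_norm)

lemma gf_cont: "continuous_on UNIV (grad f)"
  by (rule lipschitz_on_continuous_on[OF gf_lipschitz])

lemma descent: "f u \<le> f x + grad f x \<bullet> (u - x) + L / 2 * (norm (u - x))\<^sup>2"
proof -
  define w where "w = u - x"
  define \<psi> where "\<psi> t = f (x + t *\<^sub>R w) - t * (grad f x \<bullet> w) - L / 2 * t\<^sup>2 * (norm w)\<^sup>2" for t
  have der: "(\<psi> has_real_derivative (grad f (x + t *\<^sub>R w) \<bullet> w - grad f x \<bullet> w - L * t * (norm w)\<^sup>2)) (at t)" for t
  proof -
    have l: "((\<lambda>t. x + t *\<^sub>R w) has_derivative (\<lambda>s. s *\<^sub>R w)) (at t)"
      by (auto intro!: derivative_eq_intros)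
    have "((\<lambda>t. f (x + t *\<^sub>R w)) has_derivative (\<lambda>s. grad f (x + t *\<^sub>R w) \<bullet> (s *\<^sub>R w))) (at t)"
      using has_derivative_compose[OF l f_deriv] by simp
    moreover have "(\<lambda>s. s * (grad f (x + t *\<^sub>R w) \<bullet> w)) = (*) (grad f (x + t *\<^sub>R w) \<bullet> w)"
      by (rule ext) (simp add: mult.commute)
    ultimately have "((\<lambda>t. f (x + t *\<^sub>R w)) has_real_derivative (grad f (x + t *\<^sub>R w) \<bullet> w)) (at t)"
      by (simp add: has_field_derivative_def)
    then show ?thesis unfolding \<psi>_def
      by (auto intro!: derivative_eq_intros simp: power2_eq_square)
  qed
  have "\<psi> 1 \<le> \<psi> 0"
  proof (rule DERIV_nonpos_imp_nonincreasing[of 0 1])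
    fix t :: real assume t: "0 \<le> t" "t \<le> 1"
    have "grad f (x + t *\<^sub>R w) \<bullet> w - grad f x \<bullet> w = (grad f (x + t *\<^sub>R w) - grad f x) \<bullet> w"
      by (simp add: inner_diff_left)
    also have "\<dots> \<le> norm (grad f (x + t *\<^sub>R w) - grad f x) * norm w" by (rule norm_cauchy_schwarz)
    also have "\<dots> \<le> (L * (t * norm w)) * norm w"
      using f_lip[unfolded lipschitz_grad_def, rule_format, of "x + t *\<^sub>R w" x] t
      by (intro mult_right_mono) (auto simp: dist_norm)
    finally have "grad f (x + t *\<^sub>R w) \<bullet> w - grad f x \<bullet> w - L * t * (norm w)\<^sup>2 \<le> 0"
      by (simp add: power2_eq_square algebra_simps)
    then show "\<exists>y. (\<psi> has_real_derivative y) (at t) \<and> y \<le> 0" using der by blast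
  qed simp
  then show ?thesis by (simp add: \<psi>_def w_def algebra_simps)
qed

end
lemma lin1: fixes a b c d x y z :: real
  shows "a + x \<le> (b + y)/2 + (c + z)/2 \<Longrightarrow> x = y/2 + z/2 - d \<Longrightarrow> a \<le> b/2 + c/2 + d" by argo
lemma lin2: fixes gm gu gv r N X Y D :: real
  shows "gm \<le> gu/2 + gv/2 + r/8*N \<Longrightarrow> gm + (X/2 + Y/2 - D) \<le> (gu + X)/2 + (gv + Y)/2 - (D - r/8*N)"
  by argo

context fgsetup begin

lemma aux_lin: True by simp

definition gr :: "real^'n \<Rightarrow> real" where "gr u = real_of_ereal (g u)"

lemma g_not_minf: "g u \<noteq> -\<infinity>"
  using g_proper by (simp add: proper_fun_def)

lemma g_fin: "g u \<noteq> \<infinity> \<Longrightarrow> g u = ereal (gr u)"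
  using g_not_minf[of u] by (cases "g u") (auto simp: gr_def)

lemma g_mid:
  assumes "g u \<noteq> \<infinity>" "g v \<noteq> \<infinity>"
  shows "g ((1/2) *\<^sub>R u + (1/2) *\<^sub>R v) \<noteq> \<infinity> \<and>
         gr ((1/2) *\<^sub>R u + (1/2) *\<^sub>R v) \<le> gr u / 2 + gr v / 2 + \<rho> / 8 * (norm (u - v))\<^sup>2"
proof -
  let ?m = "(1/2) *\<^sub>R u + (1/2) *\<^sub>R v"
  have "g ?m + ereal (\<rho> / 2 * (norm ?m)\<^sup>2) \<le> ereal (1/2) * (g u + ereal (\<rho> / 2 * (norm u)\<^sup>2))
          + ereal (1 - 1/2) * (g v + ereal (\<rho> / 2 * (norm v)\<^sup>2))"
    using g_wc unfolding weakly_convex_def convex_efun_def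
    by (metis (no_types, lifting) add_diff_cancel_right' field_sum_of_halves le_add_same_cancel1 le_numeral_extra(1) zero_le_divide_1_iff zero_le_numeral)
  also have "\<dots> = ereal ((gr u + \<rho> / 2 * (norm u)\<^sup>2) / 2 + (gr v + \<rho> / 2 * (norm v)\<^sup>2) / 2)"
    using g_fin[OF assms(1)] g_fin[OF assms(2)] by simp
  finally have *: "g ?m + ereal (\<rho> / 2 * (norm ?m)\<^sup>2) \<le> ereal ((gr u + \<rho> / 2 * (norm u)\<^sup>2) / 2 + (gr v + \<rho> / 2 * (norm v)\<^sup>2) / 2)" .
  then have fin: "g ?m \<noteq> \<infinity>" by auto
  with * g_fin[OF fin] have "gr ?m + \<rho> / 2 * (norm ?m)\<^sup>2 \<le> (gr u + \<rho> / 2 * (norm u)\<^sup>2) / 2 + (gr v + \<rho> / 2 * (norm v)\<^sup>2) / 2"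
    by simp
  moreover have e: "(norm ?m)\<^sup>2 = (norm u)\<^sup>2 / 2 + (norm v)\<^sup>2 / 2 - (norm (u - v))\<^sup>2 / 4"
    using parallel_id[of u v 0] by simp
  have "\<rho> / 2 * (norm ?m)\<^sup>2 = \<rho> / 4 * (norm u)\<^sup>2 + \<rho> / 4 * (norm v)\<^sup>2 - \<rho> / 8 * (norm (u - v))\<^sup>2"
    unfolding e by (simp add: algebra_simps)
  then show ?thesis using fin lin1[OF \<open>gr ?m + \<rho> / 2 * (norm ?m)\<^sup>2 \<le> _\<close>] by simp
qed

lemma phistar: "\<exists>zs. g zs \<noteq> \<infinity> \<and> (\<forall>y. g y \<noteq> \<infinity> \<longrightarrow> f zs + gr zs \<le> f y + gr y)"
proof -
  obtain zs where zs: "\<And>y. ereal (f zs) + g zs \<le> ereal (f y) + g y" using argmin_ne by blast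
  obtain u0 where u0: "g u0 \<noteq> \<infinity>" using g_proper by (auto simp: proper_fun_def)
  have "ereal (f zs) + g zs \<noteq> \<infinity>" using zs[of u0] u0 g_fin[OF u0] by auto
  then have fin: "g zs \<noteq> \<infinity>" by auto
  have "f zs + gr zs \<le> f y + gr y" if "g y \<noteq> \<infinity>" for y
    using zs[of y] g_fin[OF fin] g_fin[OF that] by simp
  with fin show ?thesis by blast
qed

definition phis :: real where
  "phis = (SOME c. \<exists>zs. g zs \<noteq> \<infinity> \<and> c = f zs + gr zs \<and> (\<forall>y. g y \<noteq> \<infinity> \<longrightarrow> f zs + gr zs \<le> f y + gr y))"

lemma phis_le: "g y \<noteq> \<infinity> \<Longrightarrow> phis \<le> f y + gr y"
proof -
  have "\<exists>c zs. g zs \<noteq> \<infinity> \<and> c = f zs + gr zs \<and> (\<forall>y. g y \<noteq> \<infinity> \<longrightarrow> f zs + gr zs \<le> f y + gr y)"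
    using phistar by blast
  then have "\<exists>zs. g zs \<noteq> \<infinity> \<and> phis = f zs + gr zs \<and> (\<forall>y. g y \<noteq> \<infinity> \<longrightarrow> f zs + gr zs \<le> f y + gr y)"
    unfolding phis_def by (rule someI_ex)
  then show "g y \<noteq> \<infinity> \<Longrightarrow> phis \<le> f y + gr y" by auto
qed

definition mu :: real where "mu = 1 / \<gamma> - \<rho>"

lemma mu_pos: "0 < mu"
  using grho gamma_pos by (simp add: mu_def field_simps)

definition Fz :: "real^'n \<Rightarrow> real^'n \<Rightarrow> real" where
  "Fz z u = gr u + (norm (u - z))\<^sup>2 / (2 * \<gamma>)"

lemma Fz_mid:
  assumes "g u \<noteq> \<infinity>" "g v \<noteq> \<infinity>"
  shows "Fz z ((1/2) *\<^sub>R u + (1/2) *\<^sub>R v) \<le> Fz z u / 2 + Fz z v / 2 - mu / 8 * (norm (u - v))\<^sup>2"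
proof -
  have a: "gr ((1/2) *\<^sub>R u + (1/2) *\<^sub>R v) \<le> gr u / 2 + gr v / 2 + \<rho> / 8 * (norm (u - v))\<^sup>2"
    using g_mid[OF assms] by blast
  have b: "(norm ((1/2) *\<^sub>R u + (1/2) *\<^sub>R v - z))\<^sup>2 = (norm (u - z))\<^sup>2 / 2 + (norm (v - z))\<^sup>2 / 2 - (norm (u - v))\<^sup>2 / 4"
    by (rule parallel_id)
  have c: "(norm ((1/2) *\<^sub>R u + (1/2) *\<^sub>R v - z))\<^sup>2 / (2 * \<gamma>) = (norm (u - z))\<^sup>2 / (2 * \<gamma>) / 2 + (norm (v - z))\<^sup>2 / (2 * \<gamma>) / 2 - (norm (u - v))\<^sup>2 / (8 * \<gamma>)"
    unfolding b using gamma_pos by (simp add: field_simps)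
  have d: "(1 / \<gamma> - \<rho>) / 8 * (norm (u - v))\<^sup>2 = (norm (u - v))\<^sup>2 / (8 * \<gamma>) - \<rho> / 8 * (norm (u - v))\<^sup>2"
    using gamma_pos by (simp add: field_simps)
  show ?thesis unfolding Fz_def mu_def c d by (rule lin2[OF a])
qed

lemma Fz_lower:
  assumes "g u \<noteq> \<infinity>"
  shows "Fz z u \<ge> phis - f z - (norm (grad f z))\<^sup>2 / (4 * (1 / (2 * \<gamma>) - L / 2))"
proof -
  let ?a = "1 / (2 * \<gamma>) - L / 2"
  have apos: "0 < ?a" using gL gamma_pos by (simp add: field_simps)
  have "phis \<le> f u + gr u" by (rule phis_le[OF assms])
  also have "f u \<le> f z + grad f z \<bullet> (u - z) + L / 2 * (norm (u - z))\<^sup>2" by (rule descent)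
  finally have 1: "phis - f z \<le> gr u + grad f z \<bullet> (u - z) + L / 2 * (norm (u - z))\<^sup>2" by simp
  have "grad f z \<bullet> (u - z) \<le> norm (grad f z) * norm (u - z)"
    by (metis norm_cauchy_schwarz)
  moreover have "?a * (norm (u - z))\<^sup>2 - norm (grad f z) * norm (u - z) \<ge> - (norm (grad f z))\<^sup>2 / (4 * ?a)"
    by (rule quad_lower[OF apos])
  ultimately show ?thesis using 1 unfolding Fz_def by (simp add: algebra_simps)
qed

end


context fgsetup begin

definition isprox :: "real^'n \<Rightarrow> real^'n \<Rightarrow> bool" where
  "isprox z p \<longleftrightarrow> (\<forall>w. g p + ereal ((norm (p - z))\<^sup>2 / (2 * \<gamma>)) \<le> g w + ereal ((norm (w - z))\<^sup>2 / (2 * \<gamma>)))"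

lemma Fz_ereal: "g u \<noteq> \<infinity> \<Longrightarrow> g u + ereal ((norm (u - z))\<^sup>2 / (2 * \<gamma>)) = ereal (Fz z u)"
  using g_fin[of u] by (simp add: Fz_def)

lemma isprox_fin: assumes "isprox z p" shows "g p \<noteq> \<infinity>"
proof -
  obtain u0 where u0: "g u0 \<noteq> \<infinity>" using g_proper by (auto simp: proper_fun_def)
  have "g p + ereal ((norm (p - z))\<^sup>2 / (2 * \<gamma>)) \<le> g u0 + ereal ((norm (u0 - z))\<^sup>2 / (2 * \<gamma>))"
    using assms unfolding isprox_def by blast
  then have "g p + ereal ((norm (p - z))\<^sup>2 / (2 * \<gamma>)) \<le> ereal (Fz z u0)"
    by (simp only: Fz_ereal[OF u0])
  then show ?thesis by auto
qed

lemma isprox_le: assumes "isprox z p" "g u \<noteq> \<infinity>" shows "Fz z p \<le> Fz z u"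
proof -
  have "g p + ereal ((norm (p - z))\<^sup>2 / (2 * \<gamma>)) \<le> g u + ereal ((norm (u - z))\<^sup>2 / (2 * \<gamma>))"
    using assms(1) unfolding isprox_def by blast
  then have "ereal (Fz z p) \<le> ereal (Fz z u)"
    by (simp only: Fz_ereal[OF assms(2)] Fz_ereal[OF isprox_fin[OF assms(1)]])
  then show ?thesis by simp
qed

lemma growth: assumes "isprox z p" "g u \<noteq> \<infinity>"
  shows "Fz z p + mu / 4 * (norm (u - p))\<^sup>2 \<le> Fz z u"
proof -
  have pf: "g p \<noteq> \<infinity>" by (rule isprox_fin[OF assms(1)])
  let ?m = "(1/2) *\<^sub>R u + (1/2) *\<^sub>R p"
  have mf: "g ?m \<noteq> \<infinity>" using g_mid[OF assms(2) pf] by blast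
  have "Fz z p \<le> Fz z ?m" by (rule isprox_le[OF assms(1) mf])
  also have "\<dots> \<le> Fz z u / 2 + Fz z p / 2 - mu / 8 * (norm (u - p))\<^sup>2" by (rule Fz_mid[OF assms(2) pf])
  finally show ?thesis by argo
qed

lemma isprox_unique: assumes "isprox z p" "isprox z p'" shows "p = p'"
proof -
  have a: "Fz z p + mu / 4 * (norm (p' - p))\<^sup>2 \<le> Fz z p'" by (rule growth[OF assms(1) isprox_fin[OF assms(2)]])
  have b: "Fz z p' + mu / 4 * (norm (p - p'))\<^sup>2 \<le> Fz z p" by (rule growth[OF assms(2) isprox_fin[OF assms(1)]])
  from b have b': "Fz z p' + mu / 4 * (norm (p' - p))\<^sup>2 \<le> Fz z p" by (simp add: norm_minus_commute)
  from a b' have "mu / 4 * (norm (p' - p))\<^sup>2 \<le> 0" by argo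
  with mu_pos have "(norm (p' - p))\<^sup>2 \<le> 0" by (simp add: mult_le_0_iff)
  then show ?thesis by simp
qed

lemma isprox_exists: "\<exists>p. isprox z p"
proof -
  define S where "S = Fz z ` {u. g u \<noteq> \<infinity>}"
  obtain u0 where u0: "g u0 \<noteq> \<infinity>" using g_proper by (auto simp: proper_fun_def)
  have Sne: "S \<noteq> {}" using u0 by (auto simp: S_def)
  have Sbdd: "bdd_below S" unfolding S_def bdd_below_def using Fz_lower by blast
  define m where "m = Inf S"
  have m_le: "m \<le> Fz z v" if "g v \<noteq> \<infinity>" for v
    unfolding m_def using Sbdd that by (auto simp: S_def intro!: cInf_lower)
  have ex: "\<exists>u. g u \<noteq> \<infinity> \<and> Fz z u < m + 1 / real (Suc j)" for j
  proof -
    have "Inf S < m + 1 / real (Suc j)" by (simp add: m_def)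
    from cInf_lessD[OF Sne this] show ?thesis by (auto simp: S_def)
  qed
  have "\<forall>j. \<exists>u. g u \<noteq> \<infinity> \<and> Fz z u < m + 1 / real (Suc j)" using ex by blast
  then obtain u where u0: "\<forall>j. g (u j) \<noteq> \<infinity> \<and> Fz z (u j) < m + 1 / real (Suc j)"
    using choice[of "\<lambda>j u. g u \<noteq> \<infinity> \<and> Fz z u < m + 1 / real (Suc j)"] by blast
  then have u: "\<And>j. g (u j) \<noteq> \<infinity>" "\<And>j. Fz z (u j) < m + 1 / real (Suc j)" by auto
  have dist_bd: "(norm (u i - u j))\<^sup>2 \<le> 4 / mu * (1 / real (Suc i) + 1 / real (Suc j))" for i j
  proof -
    have mf: "g ((1/2) *\<^sub>R u i + (1/2) *\<^sub>R u j) \<noteq> \<infinity>" using g_mid[OF u(1) u(1)] by blast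
    have "m \<le> Fz z ((1/2) *\<^sub>R u i + (1/2) *\<^sub>R u j)" by (rule m_le[OF mf])
    also have "\<dots> \<le> Fz z (u i) / 2 + Fz z (u j) / 2 - mu / 8 * (norm (u i - u j))\<^sup>2"
      by (rule Fz_mid[OF u(1) u(1)])
    finally have "mu / 8 * (norm (u i - u j))\<^sup>2 \<le> (1 / real (Suc i) + 1 / real (Suc j)) / 2"
      using u(2)[of i] u(2)[of j] by argo
    then have le: "8 / mu * (mu / 8 * (norm (u i - u j))\<^sup>2) \<le> 8 / mu * ((1 / real (Suc i) + 1 / real (Suc j)) / 2)"
      using mu_pos by (intro mult_left_mono) auto
    have e1: "(norm (u i - u j))\<^sup>2 = 8 / mu * (mu / 8 * (norm (u i - u j))\<^sup>2)"
      using mu_pos by simp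
    have e2: "8 / mu * (a / 2) = 4 / mu * a" for a :: real
      by simp
    show ?thesis using le unfolding e2 by (subst e1)


  qed
  have "Cauchy u"
  proof (rule CauchyI)
    fix e :: real assume e: "0 < e"
    have pos: "0 < mu * e\<^sup>2 / 8" using mu_pos e by simp
    obtain N where N: "inverse (real (Suc N)) < mu * e\<^sup>2 / 8"
      using reals_Archimedean[OF pos] by blast
    show "\<exists>M. \<forall>i\<ge>M. \<forall>j\<ge>M. norm (u i - u j) < e"
    proof (intro exI allI impI)
      fix i j assume ij: "N \<le> i" "N \<le> j"
      let ?s = "1 / real (Suc N)"
      have h1: "1 / real (Suc i) \<le> ?s" using ij by (intro divide_left_mono) auto
      have h2: "1 / real (Suc j) \<le> ?s" using ij by (intro divide_left_mono) auto
      have h3: "1 / real (Suc i) + 1 / real (Suc j) \<le> 2 * ?s" using h1 h2 by argo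
      have h4: "4 / mu * (1 / real (Suc i) + 1 / real (Suc j)) \<le> 4 / mu * (2 * ?s)"
        using h3 mu_pos by (intro mult_left_mono) auto
      have h5: "?s < mu * e\<^sup>2 / 8" using N by (simp add: inverse_eq_divide)
      have h6: "4 / mu * (2 * ?s) < 4 / mu * (2 * (mu * e\<^sup>2 / 8))"
        using h5 mu_pos by (intro mult_strict_left_mono) auto
      have h7: "4 / mu * (2 * (mu * e\<^sup>2 / 8)) = e\<^sup>2" using mu_pos by simp
      have "(norm (u i - u j))\<^sup>2 < 4 / mu * (2 * (mu * e\<^sup>2 / 8))"
        by (rule le_less_trans[OF order_trans[OF dist_bd[of i j] h4] h6])
      then have "(norm (u i - u j))\<^sup>2 < e\<^sup>2" by (simp only: h7)
      then show "norm (u i - u j) < e" by (rule power2_less_imp_less) (use e in simp)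
    qed
  qed
  then obtain p where up: "u \<longlonglongrightarrow> p" by (auto simp: Cauchy_convergent_iff convergent_def)
  have gp: "g p \<le> ereal (m - (norm (p - z))\<^sup>2 / (2 * \<gamma>))"
  proof (rule ccontr)
    let ?qp = "(norm (p - z))\<^sup>2 / (2 * \<gamma>)"
    assume "\<not> ?thesis"
    then have "ereal (m - ?qp) < g p" by simp
    from ereal_dense2[OF this] obtain c0 where c0: "m - ?qp < c0" "ereal c0 < g p" by auto
    have "g p \<le> Liminf (at p) g" using g_lsc by (simp add: lsc_fun_def)
    with c0 have "ereal c0 < Liminf (at p) g" by simp
    from less_LiminfD[OF this] obtain d where d: "d > 0" "\<And>y. y \<noteq> p \<Longrightarrow> dist y p < d \<Longrightarrow> ereal c0 < g y"
      unfolding eventually_at by auto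
    have gy: "ereal c0 < g y" if "dist y p < d" for y
      using d c0 that by (cases "y = p") auto
    define \<eta> where "\<eta> = (c0 - (m - ?qp)) / 2"
    have eta: "0 < \<eta>" using c0 by (simp add: \<eta>_def)
    have qlim: "(\<lambda>j. (norm (u j - z))\<^sup>2 / (2 * \<gamma>)) \<longlonglongrightarrow> ?qp"
      using gamma_pos by (intro tendsto_intros up) simp
    have ev1: "eventually (\<lambda>j. dist (u j) p < d) sequentially"
      using up d(1) by (rule tendstoD)
    have ev2: "eventually (\<lambda>j. dist ((norm (u j - z))\<^sup>2 / (2 * \<gamma>)) ?qp < \<eta>) sequentially"
      using qlim eta by (rule tendstoD)
    obtain N where N: "inverse (real (Suc N)) < \<eta>" using reals_Archimedean[OF eta] by auto
    have ev3: "eventually (\<lambda>j. 1 / real (Suc j) < \<eta>) sequentially"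
      unfolding eventually_sequentially
    proof (intro exI allI impI)
      fix j assume "N \<le> j"
      then have "1 / real (Suc j) \<le> 1 / real (Suc N)" by (auto simp: frac_le)
      then show "1 / real (Suc j) < \<eta>" using N by (simp add: inverse_eq_divide)
    qed
    from eventually_conj[OF ev1 eventually_conj[OF ev2 ev3]] obtain j where
      j: "dist (u j) p < d" "dist ((norm (u j - z))\<^sup>2 / (2 * \<gamma>)) ?qp < \<eta>" "1 / real (Suc j) < \<eta>"
      unfolding eventually_sequentially by auto
    have "ereal c0 < ereal (gr (u j))" using gy[OF j(1)] g_fin[OF u(1)[of j]] by simp
    then have "c0 < gr (u j)" by simp
    moreover have "?qp - \<eta> < (norm (u j - z))\<^sup>2 / (2 * \<gamma>)" using j(2) by (simp add: dist_real_def abs_less_iff)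
    moreover have "Fz z (u j) < m + 1 / real (Suc j)" by (rule u(2))
    ultimately show False using j(3) unfolding Fz_def \<eta>_def by argo
  qed
  have isp: "isprox z p" unfolding isprox_def
  proof
    fix w
    show "g p + ereal ((norm (p - z))\<^sup>2 / (2 * \<gamma>)) \<le> g w + ereal ((norm (w - z))\<^sup>2 / (2 * \<gamma>))"
    proof (cases "g w = \<infinity>")
      case True then show ?thesis by simp
    next
      case False
      have "g p + ereal ((norm (p - z))\<^sup>2 / (2 * \<gamma>)) \<le> ereal (m - (norm (p - z))\<^sup>2 / (2 * \<gamma>)) + ereal ((norm (p - z))\<^sup>2 / (2 * \<gamma>))"
        using gp by (intro add_right_mono) 
      also have "\<dots> = ereal m" by simp
      also have "\<dots> \<le> ereal (Fz z w)" using m_le[OF False] by simp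
      finally show ?thesis using Fz_ereal[OF False, of z] by simp
    qed
  qed
  then show ?thesis by blast
qed

lemma prox_is: "isprox z (prox \<gamma> g z)"
proof -
  have "\<exists>!p. isprox z p" using isprox_exists isprox_unique by blast
  then have "isprox z (THE p. isprox z p)" by (rule theI')
  then show ?thesis by (simp add: prox_def isprox_def)
qed

end


lemma env_id:
  fixes p z z' :: "real^'n"
  shows "(norm (p - z'))\<^sup>2 - (norm (p - z))\<^sup>2 - 2 * ((z - p) \<bullet> (z' - z)) = (norm (z' - z))\<^sup>2"
  by (simp add: power2_norm_eq_inner inner_simps inner_commute)

lemma fbe_id:
  fixes x u v :: "real^'n" and c \<gamma> :: real
  assumes "0 < \<gamma>"
  shows "c + v \<bullet> (u - x) + (norm (u - x))\<^sup>2 / (2 * \<gamma>) = (c - \<gamma> / 2 * (norm v)\<^sup>2) + (norm (u - (x - \<gamma> *\<^sub>R v)))\<^sup>2 / (2 * \<gamma>)"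
proof -
  have "(norm (u - (x - \<gamma> *\<^sub>R v)))\<^sup>2 = (norm (u - x))\<^sup>2 + 2 * \<gamma> * (v \<bullet> (u - x)) + \<gamma>\<^sup>2 * (norm v)\<^sup>2"
    apply (simp add: power2_norm_eq_inner inner_simps inner_commute)
    by (simp add: field_simps power2_eq_square)
  then show ?thesis using assms by (simp add: field_simps power2_eq_square)
qed

lemma quad_deriv:
  fixes F :: "real^'n \<Rightarrow> real"
  assumes "\<And>y. \<bar>F y - F x - l \<bullet> (y - x)\<bar> \<le> C * (norm (y - x))\<^sup>2"
  shows "(F has_derivative (\<lambda>h. l \<bullet> h)) (at x)"
  unfolding has_derivative_at
proof
  show "bounded_linear ((\<bullet>) l)" by (rule bounded_linear_inner_right)
  show "(\<lambda>h. norm (F (x + h) - F x - l \<bullet> h) / norm h) \<midarrow>0\<rightarrow> 0"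
  proof (rule Lim_null_comparison)
    show "\<forall>\<^sub>F h in at 0. norm (norm (F (x + h) - F x - l \<bullet> h) / norm h) \<le> C * norm h"
    proof (rule always_eventually, rule allI)
      fix h :: "real^'n"
      have b: "\<bar>F (x + h) - F x - l \<bullet> h\<bar> \<le> C * (norm h)\<^sup>2" using assms[of "x + h"] by simp
      show "norm (norm (F (x + h) - F x - l \<bullet> h) / norm h) \<le> C * norm h"
      proof (cases "h = 0")
        case True then show ?thesis using b by simp
      next
        case False
        then have "norm h > 0" by simp
        then show ?thesis using b by (simp add: divide_le_eq power2_eq_square mult.assoc)
      qed
    qed
    show "((\<lambda>h. C * norm (h::real^'n)) \<longlongrightarrow> 0) (at 0)"
      by (rule tendsto_eq_intros, rule tendsto_const, rule tendsto_norm_zero, rule tendsto_ident_at) simp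
  qed
qed

lemma lip_id:
  fixes p p' z z' :: "real^'n"
  shows "((norm (p' - z))\<^sup>2 - (norm (p' - z'))\<^sup>2) + ((norm (p - z'))\<^sup>2 - (norm (p - z))\<^sup>2) = 2 * ((p - p') \<bullet> (z - z'))"
  by (simp add: power2_norm_eq_inner inner_simps inner_commute)

context fgsetup begin

abbreviation pz :: "real^'n \<Rightarrow> real^'n" where "pz z \<equiv> prox \<gamma> g z"

definition ee :: "real^'n \<Rightarrow> real" where "ee z = Fz z (pz z)"

definition Lp :: real where "Lp = 2 / (\<gamma> * mu)"

lemma Lp_pos: "0 < Lp" using mu_pos gamma_pos by (simp add: Lp_def)

lemma pz_fin: "g (pz z) \<noteq> \<infinity>" by (rule isprox_fin[OF prox_is])

lemma Fz_diff: "Fz z' u - Fz z u = ((norm (u - z'))\<^sup>2 - (norm (u - z))\<^sup>2) / (2 * \<gamma>)"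
  by (simp add: Fz_def diff_divide_distrib)

lemma prox_lip: "norm (pz z - pz z') \<le> Lp * norm (z - z')"
proof -
  let ?p = "pz z" and ?p' = "pz z'"
  let ?d = "norm (?p - ?p')"
  have a: "Fz z ?p + mu / 4 * (norm (?p' - ?p))\<^sup>2 \<le> Fz z ?p'" by (rule growth[OF prox_is pz_fin])
  have b: "Fz z' ?p' + mu / 4 * (norm (?p - ?p'))\<^sup>2 \<le> Fz z' ?p" by (rule growth[OF prox_is pz_fin])
  have a': "Fz z ?p + mu / 4 * ?d\<^sup>2 \<le> Fz z ?p'" using a by (simp add: norm_minus_commute)
  have "Fz z ?p' - Fz z' ?p' + (Fz z' ?p - Fz z ?p) = (((norm (?p' - z))\<^sup>2 - (norm (?p' - z'))\<^sup>2) + ((norm (?p - z'))\<^sup>2 - (norm (?p - z))\<^sup>2)) / (2 * \<gamma>)"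
    unfolding Fz_def by (simp add: diff_divide_distrib add_divide_distrib)
  also have "\<dots> = (2 * ((?p - ?p') \<bullet> (z - z'))) / (2 * \<gamma>)" by (simp only: lip_id)
  also have "\<dots> = ((?p - ?p') \<bullet> (z - z')) / \<gamma>" by simp
  also have "\<dots> \<le> ?d * norm (z - z') / \<gamma>"
    using gamma_pos by (intro divide_right_mono) (auto intro: norm_cauchy_schwarz)
  finally have key: "mu / 2 * ?d\<^sup>2 \<le> ?d * norm (z - z') / \<gamma>" using a' b by argo
  show ?thesis
  proof (cases "?d = 0")
    case True then show ?thesis using Lp_pos by simp
  next
    case False
    then have dpos: "?d > 0" by simp
    from key have "?d * (mu / 2 * ?d) \<le> ?d * (norm (z - z') / \<gamma>)" by (simp add: power2_eq_square algebra_simps)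
    then have "mu / 2 * ?d \<le> norm (z - z') / \<gamma>" by (rule mult_left_le_imp_le[OF _ dpos])
    then have "?d * (mu / 2) \<le> norm (z - z') / \<gamma>" by (simp only: mult.commute)
    moreover have mu2: "0 < mu / 2" using mu_pos by simp
    ultimately have "?d \<le> (norm (z - z') / \<gamma>) / (mu / 2)" by (simp only: pos_le_divide_eq[OF mu2])
    also have "\<dots> = Lp * norm (z - z')" using mu_pos gamma_pos by (simp add: Lp_def field_simps)
    finally show ?thesis .
  qed
qed


end


context fgsetup begin
lemma ee_rem:
  "\<bar>ee z' - ee z - ((1 / \<gamma>) *\<^sub>R (z - pz z)) \<bullet> (z' - z)\<bar> \<le> (1 / (2 * \<gamma>) + Lp / \<gamma>) * (norm (z' - z))\<^sup>2"
proof -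
  let ?p = "pz z" and ?p' = "pz z'"
  have lin: "((1 / \<gamma>) *\<^sub>R (z - ?p)) \<bullet> (z' - z) = 2 * ((z - ?p) \<bullet> (z' - z)) / (2 * \<gamma>)" by simp
  have up: "ee z' \<le> Fz z' ?p" unfolding ee_def by (rule isprox_le[OF prox_is pz_fin])
  have lo: "ee z \<le> Fz z ?p'" unfolding ee_def by (rule isprox_le[OF prox_is pz_fin])
  have u1: "Fz z' ?p - ee z - ((1 / \<gamma>) *\<^sub>R (z - ?p)) \<bullet> (z' - z) = (norm (z' - z))\<^sup>2 / (2 * \<gamma>)"
  proof -
    have "Fz z' ?p - ee z - ((1 / \<gamma>) *\<^sub>R (z - ?p)) \<bullet> (z' - z)
        = ((norm (?p - z'))\<^sup>2 - (norm (?p - z))\<^sup>2) / (2 * \<gamma>) - 2 * ((z - ?p) \<bullet> (z' - z)) / (2 * \<gamma>)"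
      unfolding ee_def lin Fz_diff by simp
    also have "\<dots> = ((norm (?p - z'))\<^sup>2 - (norm (?p - z))\<^sup>2 - 2 * ((z - ?p) \<bullet> (z' - z))) / (2 * \<gamma>)"
      by (simp only: diff_divide_distrib)
    also have "\<dots> = (norm (z' - z))\<^sup>2 / (2 * \<gamma>)" by (simp only: env_id)
    finally show ?thesis .
  qed
  have l1: "ee z' - Fz z ?p' - ((1 / \<gamma>) *\<^sub>R (z - ?p)) \<bullet> (z' - z) = ((norm (z' - z))\<^sup>2 + 2 * ((?p - ?p') \<bullet> (z' - z))) / (2 * \<gamma>)"
  proof -
    have "ee z' - Fz z ?p' = ((norm (?p' - z'))\<^sup>2 - (norm (?p' - z))\<^sup>2) / (2 * \<gamma>)"
      unfolding ee_def by (rule Fz_diff)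
    moreover have "(norm (?p' - z'))\<^sup>2 - (norm (?p' - z))\<^sup>2 - 2 * ((z - ?p) \<bullet> (z' - z)) = (norm (z' - z))\<^sup>2 + 2 * ((?p - ?p') \<bullet> (z' - z))"
      using env_id[of ?p' z' z] by (simp add: inner_diff_left algebra_simps)
    ultimately show ?thesis unfolding lin
      by (metis (no_types, lifting) diff_divide_distrib)
  qed
  let ?N = "(norm (z' - z))\<^sup>2"
  let ?ip = "(?p - ?p') \<bullet> (z' - z)"
  let ?lin = "((1 / \<gamma>) *\<^sub>R (z - ?p)) \<bullet> (z' - z)"
  have c1: "?ip \<ge> - (norm (?p - ?p') * norm (z' - z))"
    using norm_cauchy_schwarz[of "?p' - ?p" "z' - z"] by (simp add: inner_diff_left norm_minus_commute)
  have c2: "norm (?p - ?p') * norm (z' - z) \<le> Lp * ?N"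
  proof -
    have "norm (?p - ?p') * norm (z' - z) \<le> (Lp * norm (z - z')) * norm (z' - z)"
      using prox_lip[of z z'] by (rule mult_right_mono) simp
    then show ?thesis by (simp add: power2_eq_square norm_minus_commute)
  qed
  have c3: "- (Lp * ?N) \<le> ?ip" using c1 c2 by argo
  have c4: "- (Lp * ?N) / \<gamma> \<le> ?ip / \<gamma>" using c3 gamma_pos by (intro divide_right_mono) auto
  have c5: "((norm (z' - z))\<^sup>2 + 2 * ?ip) / (2 * \<gamma>) = ?N / (2 * \<gamma>) + ?ip / \<gamma>"
    by (simp add: add_divide_distrib)
  have c6: "?N / (2 * \<gamma>) \<ge> 0" using gamma_pos by simp
  have c7: "(1 / (2 * \<gamma>) + Lp / \<gamma>) * ?N = ?N / (2 * \<gamma>) + Lp * ?N / \<gamma>" by (simp add: algebra_simps)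
  have c8: "- (Lp * ?N) / \<gamma> = - (Lp * ?N / \<gamma>)" by simp
  have r_up: "ee z' - ee z - ?lin \<le> ?N / (2 * \<gamma>)" using up u1 by argo
  have r_lo: "ee z' - ee z - ?lin \<ge> ?N / (2 * \<gamma>) + ?ip / \<gamma>" using lo l1 c5 by argo
  have c9: "0 \<le> Lp * ?N / \<gamma>" using Lp_pos gamma_pos by simp
  show ?thesis unfolding abs_le_iff c7 using r_up r_lo c4 c6 c8 c9 by argo
qed

lemma ee_deriv: "(ee has_derivative (\<lambda>h. ((1 / \<gamma>) *\<^sub>R (z - pz z)) \<bullet> h)) (at z)"
  by (rule quad_deriv[OF ee_rem])

end


context fgsetup begin

definition zz :: "real^'n \<Rightarrow> real^'n" where "zz x = x - \<gamma> *\<^sub>R grad f x"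
definition Rr :: "real^'n \<Rightarrow> real^'n" where "Rr x = (1 / \<gamma>) *\<^sub>R (x - pz (zz x))"
definition Gd :: "real^'n \<Rightarrow> real^'n" where "Gd x = Rr x - \<gamma> *\<^sub>R (Rr x v* hess f x)"

lemma fbe_term:
  "ereal (f x + grad f x \<bullet> (u - x) + (norm (u - x))\<^sup>2 / (2 * \<gamma>)) + g u
     = ereal (f x - \<gamma> / 2 * (norm (grad f x))\<^sup>2) + (g u + ereal ((norm (u - zz x))\<^sup>2 / (2 * \<gamma>)))"
proof -
  have "f x + grad f x \<bullet> (u - x) + (norm (u - x))\<^sup>2 / (2 * \<gamma>)
      = (f x - \<gamma> / 2 * (norm (grad f x))\<^sup>2) + (norm (u - zz x))\<^sup>2 / (2 * \<gamma>)"
    unfolding zz_def by (rule fbe_id[OF gamma_pos])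
  moreover have "\<And>K Q G. ereal (K + Q) + G = ereal K + (G + ereal Q)"
    by (case_tac G) auto
  ultimately show ?thesis by metis
qed

lemma fbe_inf: "fbe \<gamma> f g x = f x - \<gamma> / 2 * (norm (grad f x))\<^sup>2 + ee (zz x)"
proof -
  let ?K = "f x - \<gamma> / 2 * (norm (grad f x))\<^sup>2"
  let ?p = "pz (zz x)"
  have pval: "g ?p + ereal ((norm (?p - zz x))\<^sup>2 / (2 * \<gamma>)) = ereal (ee (zz x))"
    unfolding ee_def by (rule Fz_ereal[OF pz_fin])
  have "(INF u. ereal (f x + grad f x \<bullet> (u - x) + (norm (u - x))\<^sup>2 / (2 * \<gamma>)) + g u) = ereal (?K + ee (zz x))"
  proof (rule antisym)
    have "(INF u. ereal (f x + grad f x \<bullet> (u - x) + (norm (u - x))\<^sup>2 / (2 * \<gamma>)) + g u)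
        \<le> ereal (f x + grad f x \<bullet> (?p - x) + (norm (?p - x))\<^sup>2 / (2 * \<gamma>)) + g ?p"
      by (rule INF_lower) simp
    also have "\<dots> = ereal (?K + ee (zz x))" unfolding fbe_term pval by simp
    finally show "(INF u. ereal (f x + grad f x \<bullet> (u - x) + (norm (u - x))\<^sup>2 / (2 * \<gamma>)) + g u) \<le> ereal (?K + ee (zz x))" .
  next
    show "ereal (?K + ee (zz x)) \<le> (INF u. ereal (f x + grad f x \<bullet> (u - x) + (norm (u - x))\<^sup>2 / (2 * \<gamma>)) + g u)"
    proof (rule INF_greatest)
      fix u
      have "g ?p + ereal ((norm (?p - zz x))\<^sup>2 / (2 * \<gamma>)) \<le> g u + ereal ((norm (u - zz x))\<^sup>2 / (2 * \<gamma>))"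
        using prox_is[of "zz x"] unfolding isprox_def by blast
      then have "ereal ?K + (g ?p + ereal ((norm (?p - zz x))\<^sup>2 / (2 * \<gamma>))) \<le> ereal ?K + (g u + ereal ((norm (u - zz x))\<^sup>2 / (2 * \<gamma>)))"
        by (rule add_left_mono)
      then show "ereal (?K + ee (zz x)) \<le> ereal (f x + grad f x \<bullet> (u - x) + (norm (u - x))\<^sup>2 / (2 * \<gamma>)) + g u"
        unfolding fbe_term pval by simp
    qed
  qed
  then show ?thesis unfolding fbe_def by simp
qed

lemma fbe_eq2: "fbe \<gamma> f g x = f x + grad f x \<bullet> (pz (zz x) - x) + (norm (pz (zz x) - x))\<^sup>2 / (2 * \<gamma>) + gr (pz (zz x))"
proof -
  have "f x + grad f x \<bullet> (pz (zz x) - x) + (norm (pz (zz x) - x))\<^sup>2 / (2 * \<gamma>)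
      = (f x - \<gamma> / 2 * (norm (grad f x))\<^sup>2) + (norm (pz (zz x) - zz x))\<^sup>2 / (2 * \<gamma>)"
    unfolding zz_def by (rule fbe_id[OF gamma_pos])
  then show ?thesis unfolding fbe_inf ee_def Fz_def by simp
qed

lemma Rr_eq: "Rr x = grad f x + (1 / \<gamma>) *\<^sub>R (zz x - pz (zz x))"
  using gamma_pos unfolding Rr_def zz_def by (simp add: algebra_simps)

lemma fbe_deriv: "(fbe \<gamma> f g has_derivative (\<lambda>h. Gd x \<bullet> h)) (at x)"
proof -
  let ?H = "hess f x"
  let ?a = "(1 / \<gamma>) *\<^sub>R (zz x - pz (zz x))"
  have fe: "fbe \<gamma> f g = (\<lambda>x. f x - \<gamma> / 2 * (grad f x \<bullet> grad f x) + ee (x - \<gamma> *\<^sub>R grad f x))"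
    by (rule ext) (simp add: fbe_inf zz_def power2_norm_eq_inner)
  have d2: "((\<lambda>x. grad f x \<bullet> grad f x) has_derivative (\<lambda>h. grad f x \<bullet> (?H *v h) + (?H *v h) \<bullet> grad f x)) (at x)"
    by (rule has_derivative_inner[OF gf_deriv gf_deriv])
  have d3: "((\<lambda>x. x - \<gamma> *\<^sub>R grad f x) has_derivative (\<lambda>h. h - \<gamma> *\<^sub>R (?H *v h))) (at x)"
    by (intro has_derivative_diff has_derivative_ident has_derivative_scaleR_right gf_deriv)
  have d4: "((\<lambda>x. ee (x - \<gamma> *\<^sub>R grad f x)) has_derivative (\<lambda>h. ?a \<bullet> (h - \<gamma> *\<^sub>R (?H *v h)))) (at x)"
    using has_derivative_compose[OF d3 ee_deriv[of "x - \<gamma> *\<^sub>R grad f x"]] unfolding zz_def by simp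
  have d: "((\<lambda>x. f x - \<gamma> / 2 * (grad f x \<bullet> grad f x) + ee (x - \<gamma> *\<^sub>R grad f x)) has_derivative
      (\<lambda>h. grad f x \<bullet> h - \<gamma> / 2 * (grad f x \<bullet> (?H *v h) + (?H *v h) \<bullet> grad f x) + ?a \<bullet> (h - \<gamma> *\<^sub>R (?H *v h)))) (at x)"
    by (intro has_derivative_add has_derivative_diff f_deriv has_derivative_mult_right d2 d4)
  have a_eq: "?a = Rr x - grad f x" using Rr_eq[of x] by simp
  have "(\<lambda>h. grad f x \<bullet> h - \<gamma> / 2 * (grad f x \<bullet> (?H *v h) + (?H *v h) \<bullet> grad f x) + ?a \<bullet> (h - \<gamma> *\<^sub>R (?H *v h)))
      = (\<lambda>h. Gd x \<bullet> h)"
  proof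
    fix h
    show "grad f x \<bullet> h - \<gamma> / 2 * (grad f x \<bullet> (?H *v h) + (?H *v h) \<bullet> grad f x) + ?a \<bullet> (h - \<gamma> *\<^sub>R (?H *v h)) = Gd x \<bullet> h"
    proof -
      have L: "grad f x \<bullet> h - \<gamma> / 2 * (grad f x \<bullet> (?H *v h) + (?H *v h) \<bullet> grad f x) + ?a \<bullet> (h - \<gamma> *\<^sub>R (?H *v h))
          = Rr x \<bullet> h - \<gamma> * (Rr x \<bullet> (?H *v h))"
        unfolding a_eq by (simp add: inner_diff_left inner_diff_right inner_commute algebra_simps)
      have R: "Gd x \<bullet> h = Rr x \<bullet> h - \<gamma> * (Rr x \<bullet> (?H *v h))"
        unfolding Gd_def by (simp add: inner_diff_left dot_lmul_matrix)
      show ?thesis unfolding L R ..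
    qed
  qed
  with d show ?thesis unfolding fe by (rule has_derivative_eq_rhs)
qed

lemma grad_fbe: "grad (fbe \<gamma> f g) x = Gd x"
  by (rule grad_eqI[OF fbe_deriv])

lemma pz_cont: "continuous_on UNIV pz"
proof (rule lipschitz_on_continuous_on)
  show "Lp-lipschitz_on UNIV pz"
    using prox_lip Lp_pos unfolding lipschitz_on_def dist_norm by auto
qed

lemma Rr_cont: "continuous_on UNIV Rr"
proof -
  have zc: "continuous_on UNIV zz" unfolding zz_def by (intro continuous_intros gf_cont)
  have "continuous_on UNIV (\<lambda>x. pz (zz x))"
    using continuous_on_compose[OF zc continuous_on_subset[OF pz_cont]] by (simp add: o_def)
  then show ?thesis unfolding Rr_def by (intro continuous_intros)
qed

lemma Gd_cont: "continuous_on UNIV Gd"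
proof -
  have hc: "continuous_on UNIV (hess f)" using f_C2 by (simp add: C2plus_def)
  have "continuous_on UNIV (\<lambda>x. Rr x v* hess f x)"
    unfolding vector_matrix_mult_def
    by (intro continuous_intros Rr_cont hc)
  then show ?thesis unfolding Gd_def by (intro continuous_intros Rr_cont)
qed

lemma fbe_lower: "fbe \<gamma> f g x \<ge> f (pz (zz x)) + gr (pz (zz x)) + (1 / (2 * \<gamma>) - L / 2) * (norm (pz (zz x) - x))\<^sup>2"
proof -
  have "f (pz (zz x)) \<le> f x + grad f x \<bullet> (pz (zz x) - x) + L / 2 * (norm (pz (zz x) - x))\<^sup>2" by (rule descent)
  moreover have "(1 / (2 * \<gamma>) - L / 2) * (norm (pz (zz x) - x))\<^sup>2 = (norm (pz (zz x) - x))\<^sup>2 / (2 * \<gamma>) - L / 2 * (norm (pz (zz x) - x))\<^sup>2"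
    by (simp add: algebra_simps)
  ultimately show ?thesis unfolding fbe_eq2 by argo
qed

lemma cpos: "0 < 1 / (2 * \<gamma>) - L / 2"
  using gL gamma_pos by (simp add: field_simps)

lemma fbe_ge_phis: "phis \<le> fbe \<gamma> f g x"
proof -
  have "phis \<le> f (pz (zz x)) + gr (pz (zz x))" by (rule phis_le[OF pz_fin])
  moreover have "0 \<le> (1 / (2 * \<gamma>) - L / 2) * (norm (pz (zz x) - x))\<^sup>2" using cpos by simp
  ultimately show ?thesis using fbe_lower[of x] by argo
qed

lemma fbe_le_phi: assumes "g x \<noteq> \<infinity>" shows "fbe \<gamma> f g x \<le> f x + gr x"
proof -
  have "ee (zz x) \<le> Fz (zz x) x" unfolding ee_def by (rule isprox_le[OF prox_is assms])
  moreover have "f x + grad f x \<bullet> (x - x) + (norm (x - x))\<^sup>2 / (2 * \<gamma>)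
      = (f x - \<gamma> / 2 * (norm (grad f x))\<^sup>2) + (norm (x - zz x))\<^sup>2 / (2 * \<gamma>)"
    unfolding zz_def by (rule fbe_id[OF gamma_pos])
  ultimately show ?thesis unfolding fbe_inf Fz_def by simp
qed

end


lemma tr_core:
  fixes phi :: "real^'n \<Rightarrow> real" and Gf :: "real^'n \<Rightarrow> real^'n" and x d :: "nat \<Rightarrow> real^'n"
    and \<delta> :: "nat \<Rightarrow> real" and Bm :: "nat \<Rightarrow> real^'n^'n" and pred :: "nat \<Rightarrow> real"
    and lb ma mb ca cb cc M \<beta> :: real
  assumes deriv: "\<And>y. (phi has_derivative (\<lambda>h. Gf y \<bullet> h)) (at y)"
    and cont: "continuous_on UNIV Gf"
    and lower: "\<And>y. lb \<le> phi y"
    and bnd: "bounded {y. phi y \<le> phi (x 0)}"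
    and delta0: "0 < \<delta> 0"
    and mu: "0 < ma" "ma < mb" "mb < 1"
    and cs: "0 < ca" "ca < cb" "cb < 1" "1 < cc"
    and pred_eq: "\<And>k. pred k = - (Gf (x k) \<bullet> d k) - 1 / 2 * (d k \<bullet> (Bm k *v d k))"
    and d_feas: "\<And>k. norm (d k) \<le> \<delta> k"
    and x_upd: "\<And>k. x (Suc k) = (if (phi (x k) - phi (x k + d k)) / pred k < ma then x k else x k + d k)"
    and delta_upd: "\<And>k. \<delta> (Suc k) = (let r = (phi (x k) - phi (x k + d k)) / pred k in
          if r < ma then ca * \<delta> k else if r < mb then cb * \<delta> k else cc * \<delta> k)"
    and M_pos: "0 < M"
    and B_bdd: "\<And>k. onorm (\<lambda>v. Bm k *v v) \<le> M"
    and beta: "0 < \<beta>"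
    and decrease: "\<And>k. pred k \<ge> \<beta> * norm (Gf (x k)) *
          (let nB = onorm (\<lambda>v. Bm k *v v) in if nB = 0 then \<delta> k else min (\<delta> k) (norm (Gf (x k)) / nB))"
  shows "Liminf sequentially (\<lambda>k. ereal (norm (Gf (x k)))) = 0"
proof -
  define r where "r k = (phi (x k) - phi (x k + d k)) / pred k" for k
  have dstep: "ca * \<delta> k \<le> \<delta> (Suc k)" if "0 < \<delta> k" for k
  proof -
    have a: "ca * \<delta> k \<le> cb * \<delta> k" using cs that by (intro mult_right_mono) auto
    have b: "ca * \<delta> k \<le> cc * \<delta> k" using cs that by (intro mult_right_mono) auto
    show ?thesis unfolding delta_upd Let_def using a b by auto
  qed
  have dpos: "0 < \<delta> k" for k
  proof (induct k)
    case 0 then show ?case by (rule delta0)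
  next
    case (Suc k)
    have "0 < ca * \<delta> k" using cs(1) Suc by simp
    also have "\<dots> \<le> \<delta> (Suc k)" by (rule dstep[OF Suc])
    finally show ?case .
  qed
  have nB_nonneg: "0 \<le> onorm (\<lambda>v. Bm k *v v)" for k
    by (rule onorm_pos_le) simp
  have let_nonneg: "0 \<le> (let nB = onorm (\<lambda>v. Bm k *v v) in if nB = 0 then \<delta> k else min (\<delta> k) (norm (Gf (x k)) / nB))" for k
    using dpos[of k] nB_nonneg[of k] by (simp add: Let_def)
  have pred_nonneg: "0 \<le> pred k" for k
  proof -
    have "0 \<le> \<beta> * norm (Gf (x k)) * (let nB = onorm (\<lambda>v. Bm k *v v) in if nB = 0 then \<delta> k else min (\<delta> k) (norm (Gf (x k)) / nB))"
      using beta let_nonneg[of k] by simp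
    then show ?thesis using decrease[of k] by linarith
  qed
  have succ: "x (Suc k) = x k + d k \<and> 0 < pred k \<and> phi (x (Suc k)) \<le> phi (x k) - ma * pred k"
    if "ma \<le> r k" for k
  proof -
    have xs: "x (Suc k) = x k + d k" using that x_upd[of k] by (simp add: r_def)
    have "pred k \<noteq> 0" using that mu(1) by (auto simp: r_def)
    then have pp: "0 < pred k" using pred_nonneg[of k] by simp
    have "ma * pred k \<le> phi (x k) - phi (x k + d k)"
      using that pp by (simp add: r_def pos_le_divide_eq)
    then show ?thesis using xs pp by simp
  qed
  have unsucc: "x (Suc k) = x k \<and> \<delta> (Suc k) = ca * \<delta> k" if "r k < ma" for k
    using that x_upd[of k] delta_upd[of k] by (simp add: r_def Let_def)
  have mono1: "phi (x (Suc k)) \<le> phi (x k)" for k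
  proof (cases "r k < ma")
    case True then show ?thesis using unsucc by simp
  next
    case False
    then have "ma \<le> r k" by simp
    from succ[OF this] have a: "phi (x (Suc k)) \<le> phi (x k) - ma * pred k" and b: "0 < pred k" by auto
    have "0 < ma * pred k" using mu(1) b by simp
    with a show ?thesis by linarith
  qed
  have monoK: "phi (x j) \<le> phi (x k)" if "k \<le> j" for j k
    using lift_Suc_antimono_le[of "\<lambda>k. phi (x k)", OF mono1 that] .
  obtain R where R: "\<And>k. norm (x k) \<le> R"
  proof -
    from bnd obtain a where a: "\<And>y. y \<in> {y. phi y \<le> phi (x 0)} \<Longrightarrow> norm y \<le> a"
      unfolding bounded_iff by blast
    have "norm (x k) \<le> a" for k using a monoK[of 0 k] by simp
    then show ?thesis using that by blast
  qed
  define K where "K = cball (0::real^'n) (R + 1)"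
  have ucK: "uniformly_continuous_on K Gf"
    unfolding K_def by (rule compact_uniformly_continuous[OF continuous_on_subset[OF cont] compact_cball]) simp
  show ?thesis
  proof (rule ccontr)
    assume ne: "Liminf sequentially (\<lambda>k. ereal (norm (Gf (x k)))) \<noteq> 0"
    have "0 \<le> Liminf sequentially (\<lambda>k. ereal (norm (Gf (x k))))"
      by (rule Liminf_bounded) simp
    with ne have "0 < Liminf sequentially (\<lambda>k. ereal (norm (Gf (x k))))" by simp
    from ereal_dense2[OF this] obtain \<epsilon> where eps: "0 < ereal \<epsilon>" "ereal \<epsilon> < Liminf sequentially (\<lambda>k. ereal (norm (Gf (x k))))"
      by blast
    have epos: "0 < \<epsilon>" using eps(1) by simp
    from less_LiminfD[OF eps(2)] obtain N where N: "\<And>k. N \<le> k \<Longrightarrow> \<epsilon> < norm (Gf (x k))"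
      unfolding eventually_sequentially by auto
    have predlow: "\<beta> * \<epsilon> * min (\<delta> k) (\<epsilon> / M) \<le> pred k" if "N \<le> k" for k
    proof -
      let ?G = "norm (Gf (x k))"
      let ?nB = "onorm (\<lambda>v. Bm k *v v)"
      have G: "\<epsilon> < ?G" by (rule N[OF that])
      have mn: "0 \<le> min (\<delta> k) (\<epsilon> / M)" using dpos[of k] epos M_pos by simp
      have "min (\<delta> k) (\<epsilon> / M) \<le> (if ?nB = 0 then \<delta> k else min (\<delta> k) (?G / ?nB))"
      proof (cases "?nB = 0")
        case True then show ?thesis by simp
      next
        case False
        then have nbp: "0 < ?nB" using nB_nonneg[of k] by simp
        have "\<epsilon> / M \<le> \<epsilon> / ?nB" using B_bdd[of k] nbp epos by (intro divide_left_mono) auto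
        also have "\<dots> \<le> ?G / ?nB" using G nbp by (intro divide_right_mono) auto
        finally show ?thesis using False by simp
      qed
      then have "\<beta> * \<epsilon> * min (\<delta> k) (\<epsilon> / M) \<le> \<beta> * ?G * (if ?nB = 0 then \<delta> k else min (\<delta> k) (?G / ?nB))"
        using G beta epos mn by (intro mult_mono) auto
      then show ?thesis using decrease[of k] by (simp add: Let_def)
    qed
    define \<omega> where "\<omega> = (1 - mb) * \<beta> * \<epsilon> / 2"
    have om: "0 < \<omega>" unfolding \<omega>_def using mu beta epos by simp
    from ucK[unfolded uniformly_continuous_on_def, rule_format, OF om] obtain \<Delta>1 where
      D1a: "0 < \<Delta>1" "\<forall>y\<in>K. \<forall>y'\<in>K. dist y' y < \<Delta>1 \<longrightarrow> dist (Gf y') (Gf y) < \<omega>"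
      by blast
    have D1: "0 < \<Delta>1" "\<And>y y'. y \<in> K \<Longrightarrow> y' \<in> K \<Longrightarrow> dist y' y < \<Delta>1 \<Longrightarrow> dist (Gf y') (Gf y) < \<omega>"
      using D1a by auto
    define \<Delta> where "\<Delta> = min (min 1 (\<epsilon> / M)) (min (\<Delta>1 / 2) ((1 - mb) * \<beta> * \<epsilon> / M))"
    have Dpos: "0 < \<Delta>" unfolding \<Delta>_def using D1(1) epos M_pos mu beta by simp
    have D_le: "\<Delta> \<le> 1" "\<Delta> \<le> \<epsilon> / M" "\<Delta> < \<Delta>1" "M * \<Delta> \<le> 2 * \<omega>"
    proof -
      show "\<Delta> \<le> 1" "\<Delta> \<le> \<epsilon> / M" unfolding \<Delta>_def by auto
      have "\<Delta> \<le> \<Delta>1 / 2" unfolding \<Delta>_def by (meson min.cobounded1 min.cobounded2 order_trans)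
      then show "\<Delta> < \<Delta>1" using D1(1) by argo
      have "\<Delta> \<le> (1 - mb) * \<beta> * \<epsilon> / M" unfolding \<Delta>_def by (meson min.cobounded2 order_trans)
      then have "M * \<Delta> \<le> M * ((1 - mb) * \<beta> * \<epsilon> / M)" using M_pos by (intro mult_left_mono) auto
      also have "\<dots> = 2 * \<omega>" unfolding \<omega>_def using M_pos by simp
      finally show "M * \<Delta> \<le> 2 * \<omega>" .
    qed
    have key: "mb \<le> r k" if kN: "N \<le> k" and dk: "\<delta> k \<le> \<Delta>" for k
    proof -
      let ?x = "x k" and ?d = "d k" and ?G = "Gf (x k)"
      have nd: "norm ?d \<le> \<Delta>" using d_feas[of k] dk by linarith
      have xK: "?x \<in> K" using R[of k] unfolding K_def by simp
      let ?S = "closed_segment ?x (?x + ?d)"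
      have segK: "y \<in> K" and segd: "dist y ?x < \<Delta>1" if "y \<in> ?S" for y
      proof -
        have "dist y ?x \<le> dist ?x (?x + ?d)" using dist_in_closed_segment[OF that] by blast
        then have dy: "dist y ?x \<le> norm ?d" by (simp add: dist_norm)
        then have "norm y \<le> norm ?x + norm ?d" using norm_triangle_sub[of y ?x] by (simp add: dist_norm)
        then show "y \<in> K" unfolding K_def using R[of k] nd D_le(1) by simp
        show "dist y ?x < \<Delta>1" using dy nd D_le(3) by linarith
      qed
      have E1: "norm ((phi (?x + ?d) - ?G \<bullet> (?x + ?d)) - (phi ?x - ?G \<bullet> ?x)) \<le> \<omega> * norm ((?x + ?d) - ?x)"
      proof (rule differentiable_bound[of ?S])
        show "convex ?S" by (rule convex_closed_segment)
        show "((\<lambda>y. phi y - ?G \<bullet> y) has_derivative (\<lambda>h. (Gf y - ?G) \<bullet> h)) (at y within ?S)" if "y \<in> ?S" for y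
        proof -
          have d0: "((\<lambda>y. phi y - ?G \<bullet> y) has_derivative (\<lambda>h. Gf y \<bullet> h - ?G \<bullet> h)) (at y)"
            by (rule has_derivative_diff[OF deriv has_derivative_inner_right[OF has_derivative_ident]])
          have "(\<lambda>h. Gf y \<bullet> h - ?G \<bullet> h) = (\<lambda>h. (Gf y - ?G) \<bullet> h)"
            by (rule ext) (simp only: inner_diff_left)
          with d0 have "((\<lambda>y. phi y - ?G \<bullet> y) has_derivative (\<lambda>h. (Gf y - ?G) \<bullet> h)) (at y)"
            by simp
          then show ?thesis by (rule has_derivative_at_withinI)
        qed
        show "onorm (\<lambda>h. (Gf y - ?G) \<bullet> h) \<le> \<omega>" if "y \<in> ?S" for y
        proof (rule onorm_le)
          fix h
          have "dist (Gf y) ?G < \<omega>" using D1(2)[OF xK segK[OF that] segd[OF that]] .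
          then have "norm (Gf y - ?G) \<le> \<omega>" by (simp add: dist_norm)
          then show "norm ((Gf y - ?G) \<bullet> h) \<le> \<omega> * norm h"
          proof -
            have "norm ((Gf y - ?G) \<bullet> h) \<le> norm (Gf y - ?G) * norm h"
              using Cauchy_Schwarz_ineq2[of "Gf y - ?G" h] by simp
            also have "\<dots> \<le> \<omega> * norm h" by (rule mult_right_mono[OF \<open>norm (Gf y - ?G) \<le> \<omega>\<close> norm_ge_zero])
            finally show ?thesis .
          qed
        qed
        show "?x + ?d \<in> ?S" by simp
        show "?x \<in> ?S" by simp
      qed
      have E1': "\<bar>phi (?x + ?d) - phi ?x - ?G \<bullet> ?d\<bar> \<le> \<omega> * norm ?d"
        using E1 by (simp add: inner_add_right algebra_simps)
      have Bd: "norm (Bm k *v ?d) \<le> M * norm ?d"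
      proof -
        have "norm (Bm k *v ?d) \<le> onorm (\<lambda>v. Bm k *v v) * norm ?d" by (rule onorm) simp
        also have "\<dots> \<le> M * norm ?d" using B_bdd[of k] by (intro mult_right_mono) auto
        finally show ?thesis .
      qed
      have E2: "\<bar>1 / 2 * (?d \<bullet> (Bm k *v ?d))\<bar> \<le> \<omega> * norm ?d"
      proof -
        have "\<bar>?d \<bullet> (Bm k *v ?d)\<bar> \<le> norm ?d * norm (Bm k *v ?d)" by (rule Cauchy_Schwarz_ineq2)
        also have "\<dots> \<le> norm ?d * (M * norm ?d)" using Bd by (intro mult_left_mono) auto
        also have "\<dots> = (M * norm ?d) * norm ?d" by simp
        also have "\<dots> \<le> (M * \<Delta>) * norm ?d" using nd M_pos by (intro mult_right_mono) auto
        also have "\<dots> \<le> (2 * \<omega>) * norm ?d" using D_le(4) by (intro mult_right_mono) auto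
        finally show ?thesis by simp
      qed
      have nd2: "norm ?d \<le> \<delta> k" by (rule d_feas)
      have pl: "\<beta> * \<epsilon> * \<delta> k \<le> pred k"
        using predlow[OF kN] dk D_le(2) by (simp add: min_def split: if_splits)
      have "0 < \<beta> * \<epsilon> * \<delta> k" using beta epos dpos[of k] by simp
      then have ppos: "0 < pred k" using pl by linarith
      have eq: "pred k - (phi ?x - phi (?x + ?d)) = (phi (?x + ?d) - phi ?x - ?G \<bullet> ?d) - 1 / 2 * (?d \<bullet> (Bm k *v ?d))"
        using pred_eq[of k] by simp
      have diffb: "pred k - (phi ?x - phi (?x + ?d)) \<le> 2 * \<omega> * norm ?d"
      proof -
        have e1: "phi (?x + ?d) - phi ?x - ?G \<bullet> ?d \<le> \<omega> * norm ?d" using E1' by (rule abs_le_D1)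
        have e2: "- (1 / 2 * (?d \<bullet> (Bm k *v ?d))) \<le> \<omega> * norm ?d" using E2 by (rule abs_le_D2)
        have "(phi (?x + ?d) - phi ?x - ?G \<bullet> ?d) + - (1 / 2 * (?d \<bullet> (Bm k *v ?d))) \<le> \<omega> * norm ?d + \<omega> * norm ?d"
          by (rule add_mono[OF e1 e2])
        then show ?thesis unfolding eq by simp
      qed
      have "2 * \<omega> * norm ?d \<le> 2 * \<omega> * \<delta> k" using nd2 om by simp
      also have "2 * \<omega> * \<delta> k = (1 - mb) * (\<beta> * \<epsilon> * \<delta> k)" unfolding \<omega>_def by simp
      also have "\<dots> \<le> (1 - mb) * pred k" using pl mu by (intro mult_left_mono) auto
      finally have "mb * pred k \<le> phi ?x - phi (?x + ?d)" using diffb by (simp add: algebra_simps)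
      then show ?thesis using ppos by (simp add: r_def pos_le_divide_eq)
    qed
    define \<eta> where "\<eta> = min (\<delta> N) (ca * \<Delta>)"
    have etapos: "0 < \<eta>" unfolding \<eta>_def using dpos[of N] cs(1) Dpos by simp
    have lowd: "\<eta> \<le> \<delta> k" if "N \<le> k" for k
      using that
    proof (induct k rule: dec_induct)
      case base then show ?case by (simp add: \<eta>_def)
    next
      case (step k)
      show ?case
      proof (cases "\<delta> k \<le> \<Delta>")
        case True
        have rk: "mb \<le> r k" by (rule key[OF step(1) True])
        then have "\<delta> (Suc k) = cc * \<delta> k" using mu unfolding delta_upd Let_def r_def[symmetric] by simp
        also have "\<dots> \<ge> \<delta> k" using cs(4) dpos[of k] by simp
        finally show ?thesis using step(3) by simp
      next
        case False
        have "\<eta> \<le> ca * \<Delta>" by (simp add: \<eta>_def)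
        also have "\<dots> \<le> ca * \<delta> k" using False cs(1) by simp
        also have "\<dots> \<le> \<delta> (Suc k)" by (rule dstep[OF dpos])
        finally show ?thesis .
      qed
    qed
    define p0 where "p0 = \<beta> * \<epsilon> * min \<eta> (\<epsilon> / M)"
    have p0pos: "0 < p0" unfolding p0_def using beta epos etapos M_pos by simp
    have predp0: "p0 \<le> pred k" if "N \<le> k" for k
    proof -
      have "min \<eta> (\<epsilon> / M) \<le> min (\<delta> k) (\<epsilon> / M)" using lowd[OF that] by (simp add: min.coboundedI1)
      then have "p0 \<le> \<beta> * \<epsilon> * min (\<delta> k) (\<epsilon> / M)" unfolding p0_def using beta epos by simp
      also have "\<dots> \<le> pred k" by (rule predlow[OF that])
      finally show ?thesis .
    qed
    have infsucc: "\<exists>k\<ge>K0. ma \<le> r k" for K0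
    proof (rule ccontr)
      assume "\<not> ?thesis"
      then have uns: "\<And>k. K0 \<le> k \<Longrightarrow> r k < ma" by auto
      define K1 where "K1 = max K0 N"
      have geo: "\<delta> (K1 + j) = ca ^ j * \<delta> K1" for j
      proof (induct j)
        case 0 then show ?case by simp
      next
        case (Suc j)
        have "r (K1 + j) < ma" using uns[of "K1 + j"] by (simp add: K1_def)
        then have "\<delta> (Suc (K1 + j)) = ca * \<delta> (K1 + j)" using unsucc by blast
        then show ?case using Suc by simp
      qed
      have "0 < \<eta> / \<delta> K1" using etapos dpos[of K1] by simp
      moreover have "ca < 1" using cs by linarith
      ultimately obtain j where j: "ca ^ j < \<eta> / \<delta> K1" using real_arch_pow_inv by blast
      then have "ca ^ j * \<delta> K1 < \<eta>" using dpos[of K1] by (simp add: pos_less_divide_eq)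
      then have "\<delta> (K1 + j) < \<eta>" using geo[of j] by simp
      moreover have "\<eta> \<le> \<delta> (K1 + j)" by (rule lowd) (simp add: K1_def)
      ultimately show False by simp
    qed
    have desc: "\<exists>k\<ge>N. phi (x k) \<le> phi (x N) - real m * (ma * p0)" for m
    proof (induct m)
      case 0 then show ?case by auto
    next
      case (Suc m)
      then obtain k where k: "N \<le> k" "phi (x k) \<le> phi (x N) - real m * (ma * p0)" by blast
      obtain j where j: "k \<le> j" "ma \<le> r j" using infsucc[of k] by blast
      have s: "phi (x (Suc j)) \<le> phi (x j) - ma * pred j" using succ[OF j(2)] by blast
      have "ma * p0 \<le> ma * pred j" using predp0[of j] k(1) j(1) mu(1) by simp
      moreover have "phi (x j) \<le> phi (x k)" by (rule monoK[OF j(1)])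
      ultimately have "phi (x (Suc j)) \<le> phi (x N) - real (Suc m) * (ma * p0)"
        using s k(2) by (simp add: algebra_simps)
      moreover have "N \<le> Suc j" using k(1) j(1) by simp
      ultimately show ?case by blast
    qed
    have "0 < ma * p0" using mu(1) p0pos by simp
    from ex_less_of_nat_mult[OF this] obtain m where m: "phi (x N) - lb < real m * (ma * p0)" by blast
    from desc[of m] obtain k where "phi (x k) \<le> phi (x N) - real m * (ma * p0)" by blast
    with m lower[of "x k"] show False by simp
  qed
qed

context fgsetup begin

lemma fbe_level_bdd:
  assumes bd: "bounded {y. ereal (f y) + g y \<le> ereal (f x0) + g x0}"
  shows "bounded {y. fbe \<gamma> f g y \<le> fbe \<gamma> f g x0}"
proof -
  have gx0: "g x0 \<noteq> \<infinity>"
  proof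
    assume "g x0 = \<infinity>"
    then have "{y. ereal (f y) + g y \<le> ereal (f x0) + g x0} = UNIV" by simp
    with bd show False by simp
  qed
  obtain a where a: "\<And>y. y \<in> {y. ereal (f y) + g y \<le> ereal (f x0) + g x0} \<Longrightarrow> norm y \<le> a"
    using bd unfolding bounded_iff by blast
  define c where "c = 1 / (2 * \<gamma>) - L / 2"
  have cp: "0 < c" unfolding c_def by (rule cpos)
  define \<Phi>0 where "\<Phi>0 = f x0 + gr x0"
  define D where "D = (\<Phi>0 - phis) / c"
  have "norm y \<le> a + max 1 D" if y: "fbe \<gamma> f g y \<le> fbe \<gamma> f g x0" for y
  proof -
    let ?p = "pz (zz y)"
    have f0: "fbe \<gamma> f g x0 \<le> \<Phi>0" unfolding \<Phi>0_def by (rule fbe_le_phi[OF gx0])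
    have fl: "f ?p + gr ?p + c * (norm (?p - y))\<^sup>2 \<le> fbe \<gamma> f g y" unfolding c_def by (rule fbe_lower)
    have cn: "0 \<le> c * (norm (?p - y))\<^sup>2" using cp by simp
    have pl: "f ?p + gr ?p \<le> \<Phi>0" using fl cn y f0 by linarith
    have "ereal (f ?p) + g ?p = ereal (f ?p + gr ?p)" using g_fin[OF pz_fin] by simp
    also have "\<dots> \<le> ereal \<Phi>0" using pl by simp
    also have "\<dots> = ereal (f x0) + g x0" unfolding \<Phi>0_def using g_fin[OF gx0] by simp
    finally have pa: "norm ?p \<le> a" using a by blast
    have "phis \<le> f ?p + gr ?p" by (rule phis_le[OF pz_fin])
    then have "c * (norm (?p - y))\<^sup>2 \<le> \<Phi>0 - phis" using fl y f0 by linarith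
    then have sq: "(norm (?p - y))\<^sup>2 \<le> D" unfolding D_def using cp by (simp add: pos_le_divide_eq mult.commute)
    have nb: "norm (?p - y) \<le> max 1 D"
    proof (cases "norm (?p - y) \<le> 1")
      case True then show ?thesis by simp
    next
      case False
      then have t1: "1 \<le> norm (?p - y)" by simp
      have "norm (?p - y) = 1 * norm (?p - y)" by simp
      also have "\<dots> \<le> norm (?p - y) * norm (?p - y)" by (rule mult_right_mono[OF t1 norm_ge_zero])
      finally have "norm (?p - y) \<le> (norm (?p - y))\<^sup>2" by (simp add: power2_eq_square)
      with sq show ?thesis by simp
    qed
    have "norm y \<le> norm ?p + norm (?p - y)" using norm_triangle_sub[of y ?p] by (simp add: norm_minus_commute)
    then show ?thesis using pa nb by linarith
  qed
  then show ?thesis unfolding bounded_iff by blast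
qed

end

theorem theoremA4:
  fixes f :: "real^'n \<Rightarrow> real" and g :: "real^'n \<Rightarrow> ereal"
    and L \<rho> \<gamma> \<mu>1 \<mu>2 c1 c2 c3 M \<beta> :: real
    and x :: "nat \<Rightarrow> real^'n" and d :: "nat \<Rightarrow> real^'n" and \<delta> :: "nat \<Rightarrow> real"
    and P :: "nat \<Rightarrow> real^'n^'n"
  assumes f_C2: "C2plus f"
    and f_lip: "lipschitz_grad L f"
    and g_proper: "proper_fun g" and g_lsc: "lsc_fun g"
    and g_wc: "weakly_convex \<rho> g" and rho_nonneg: "0 \<le> \<rho>"
    and argmin_ne: "\<exists>z. \<forall>y. ereal (f z) + g z \<le> ereal (f y) + g y"
    and level_bdd: "bounded {y. ereal (f y) + g y \<le> ereal (f (x 0)) + g (x 0)}"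
    and gamma: "0 < \<gamma>" "\<gamma> * L < 1" "\<gamma> * \<rho> < 1"
    and delta0: "0 < \<delta> 0"
    and mu: "0 < \<mu>1" "\<mu>1 < \<mu>2" "\<mu>2 < 1"
    and cs: "0 < c1" "c1 < c2" "c2 < 1" "1 < c3"
    and P_sel: "\<And>k. P k \<in> clarke_jac (prox \<gamma> g) (x k - \<gamma> *\<^sub>R grad f (x k))"
    and no_stop: "\<And>k. \<not> (residual \<gamma> f g (x k) = 0 \<and>
          lambda_min ((1 / \<gamma>) *\<^sub>R ((mat 1 - \<gamma> *\<^sub>R hess f (x k))
                        ** (mat 1 - P k ** (mat 1 - \<gamma> *\<^sub>R hess f (x k))))) \<ge> 0)"
    and d_feas: "\<And>k. norm (d k) \<le> \<delta> k"
    and x_upd: "\<And>k. x (Suc k) =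
          (if (fbe \<gamma> f g (x k) - fbe \<gamma> f g (x k + d k)) /
              (tr_model (fbe \<gamma> f g) ((1 / \<gamma>) *\<^sub>R ((mat 1 - \<gamma> *\<^sub>R hess f (x k))
                        ** (mat 1 - P k ** (mat 1 - \<gamma> *\<^sub>R hess f (x k))))) (x k) 0
               - tr_model (fbe \<gamma> f g) ((1 / \<gamma>) *\<^sub>R ((mat 1 - \<gamma> *\<^sub>R hess f (x k))
                        ** (mat 1 - P k ** (mat 1 - \<gamma> *\<^sub>R hess f (x k))))) (x k) (d k)) < \<mu>1
           then x k else x k + d k)"
    and delta_upd: "\<And>k. \<delta> (Suc k) =
          (let r = (fbe \<gamma> f g (x k) - fbe \<gamma> f g (x k + d k)) /
              (tr_model (fbe \<gamma> f g) ((1 / \<gamma>) *\<^sub>R ((mat 1 - \<gamma> *\<^sub>R hess f (x k))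
                        ** (mat 1 - P k ** (mat 1 - \<gamma> *\<^sub>R hess f (x k))))) (x k) 0
               - tr_model (fbe \<gamma> f g) ((1 / \<gamma>) *\<^sub>R ((mat 1 - \<gamma> *\<^sub>R hess f (x k))
                        ** (mat 1 - P k ** (mat 1 - \<gamma> *\<^sub>R hess f (x k))))) (x k) (d k))
           in if r < \<mu>1 then c1 * \<delta> k else if r < \<mu>2 then c2 * \<delta> k else c3 * \<delta> k)"
    and M_pos: "0 < M"
    and B_bdd: "\<And>k. onorm (\<lambda>v. ((1 / \<gamma>) *\<^sub>R ((mat 1 - \<gamma> *\<^sub>R hess f (x k))
                        ** (mat 1 - P k ** (mat 1 - \<gamma> *\<^sub>R hess f (x k))))) *v v) \<le> M"
    and beta: "0 < \<beta>" "\<beta> < 1"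
    and decrease: "\<And>k.
          tr_model (fbe \<gamma> f g) ((1 / \<gamma>) *\<^sub>R ((mat 1 - \<gamma> *\<^sub>R hess f (x k))
                        ** (mat 1 - P k ** (mat 1 - \<gamma> *\<^sub>R hess f (x k))))) (x k) 0
        - tr_model (fbe \<gamma> f g) ((1 / \<gamma>) *\<^sub>R ((mat 1 - \<gamma> *\<^sub>R hess f (x k))
                        ** (mat 1 - P k ** (mat 1 - \<gamma> *\<^sub>R hess f (x k))))) (x k) (d k)
        \<ge> \<beta> * norm (grad (fbe \<gamma> f g) (x k)) *
           (let nB = onorm (\<lambda>v. ((1 / \<gamma>) *\<^sub>R ((mat 1 - \<gamma> *\<^sub>R hess f (x k))
                        ** (mat 1 - P k ** (mat 1 - \<gamma> *\<^sub>R hess f (x k))))) *v v)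
            in if nB = 0 then \<delta> k else min (\<delta> k) (norm (grad (fbe \<gamma> f g) (x k)) / nB))"
  shows "Liminf sequentially (\<lambda>k. ereal (norm (grad (fbe \<gamma> f g) (x k)))) = 0"
proof -
  interpret fg: fgsetup f g L \<rho> \<gamma>
    using f_C2 f_lip g_proper g_lsc g_wc rho_nonneg argmin_ne gamma by unfold_locales auto
  define Bm where "Bm k = (1 / \<gamma>) *\<^sub>R ((mat 1 - \<gamma> *\<^sub>R hess f (x k))
                        ** (mat 1 - P k ** (mat 1 - \<gamma> *\<^sub>R hess f (x k))))" for k
  define pr where "pr k = tr_model (fbe \<gamma> f g) (Bm k) (x k) 0 - tr_model (fbe \<gamma> f g) (Bm k) (x k) (d k)" for k
  have gr_eq: "grad (fbe \<gamma> f g) y = fg.Gd y" for y by (rule fg.grad_fbe)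
  have "Liminf sequentially (\<lambda>k. ereal (norm (fg.Gd (x k)))) = 0"
  proof (rule tr_core[where phi = "fbe \<gamma> f g" and Gf = fg.Gd and x = x and d = d and \<delta> = \<delta> and Bm = Bm
        and pred = pr and lb = fg.phis and ma = \<mu>1 and mb = \<mu>2 and ca = c1 and cb = c2 and cc = c3 and M = M and \<beta> = \<beta>])
    show "\<And>y. (fbe \<gamma> f g has_derivative (\<lambda>h. fg.Gd y \<bullet> h)) (at y)" by (rule fg.fbe_deriv)
    show "continuous_on UNIV fg.Gd" by (rule fg.Gd_cont)
    show "\<And>y. fg.phis \<le> fbe \<gamma> f g y" by (rule fg.fbe_ge_phis)
    show "bounded {y. fbe \<gamma> f g y \<le> fbe \<gamma> f g (x 0)}" by (rule fg.fbe_level_bdd[OF level_bdd])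
    show "0 < \<delta> 0" by (rule delta0)
    show "0 < \<mu>1" "\<mu>1 < \<mu>2" "\<mu>2 < 1" by (rule mu(1), rule mu(2), rule mu(3))
    show "0 < c1" "c1 < c2" "c2 < 1" "1 < c3" by (rule cs(1), rule cs(2), rule cs(3), rule cs(4))
    show "\<And>k. pr k = - (fg.Gd (x k) \<bullet> d k) - 1 / 2 * (d k \<bullet> (Bm k *v d k))"
      by (simp add: pr_def tr_model_def gr_eq)
    show "\<And>k. norm (d k) \<le> \<delta> k" by (rule d_feas)
    show "\<And>k. x (Suc k) = (if (fbe \<gamma> f g (x k) - fbe \<gamma> f g (x k + d k)) / pr k < \<mu>1 then x k else x k + d k)"
      unfolding pr_def Bm_def by (rule x_upd)
    show "\<And>k. \<delta> (Suc k) = (let r = (fbe \<gamma> f g (x k) - fbe \<gamma> f g (x k + d k)) / pr k in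
          if r < \<mu>1 then c1 * \<delta> k else if r < \<mu>2 then c2 * \<delta> k else c3 * \<delta> k)"
      unfolding pr_def Bm_def by (rule delta_upd)
    show "0 < M" by (rule M_pos)
    show "\<And>k. onorm (\<lambda>v. Bm k *v v) \<le> M" unfolding Bm_def by (rule B_bdd)
    show "0 < \<beta>" by (rule beta(1))
    show "\<And>k. pr k \<ge> \<beta> * norm (fg.Gd (x k)) *
          (let nB = onorm (\<lambda>v. Bm k *v v) in if nB = 0 then \<delta> k else min (\<delta> k) (norm (fg.Gd (x k)) / nB))"
      unfolding pr_def Bm_def gr_eq[symmetric] by (rule decrease)
  qed
  then show ?thesis by (simp only: gr_eq)
qed


end
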